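(* For every semistandard hook-valued tableau $T$, the tableau $P(T)$ (the first component of the uncrowding map $\mathcal U(T)=(P(T),Q(T))$) is a set-valued tableau, i.e. a hook-valued tableau with arm excess $0$.
   Context: French notation: row $1$ is the bottom row, rows are numbered upward, columns from left to right; cell $(r,c)$ lies in row $r$ and column $c$. A semistandard tableau of hook shape $U$ consists of a hook entry $x$, a leg $\ell_1<\dots<\ell_p$ above $x$ with $x<\ell_1$, and an arm $a_1\le\dots\le a_q$ to the right of $x$ with $x\le a_1$ ($p,q\ge0$, positive integers). A (semistandard) hook-valued tableau (HVT) of partition shape $\lambda$ is a filling of the cells of $\lambda$ by such hook tableaux such that $\max(A)\le\min(B)$ whenever the cell of $A$ is left of the cell of $B$ in the same row, and $\max(A)<\min(C)$ whenever the cell of $A$ is below the cell of $C$ in the same column. Write $\mathsf H_T(r,c),\mathsf L_T(r,c),\mathsf A_T(r,c)$ for hook entry, leg, arm of cell $(r,c)$. Arm excess = total number of arm entries; a set-valued tableau is an HVT of arm excess $0$. Uncrowding bumping $\mathcal V_b$: if arm excess of $T$ is $0$, $\mathcal V_b(T)=T$. Otherwise let $c$ be the largest index of a column containing a cell with nonempty arm; among such cells in column $c$ let $(r,c)$ be the one whose arm contains the largest value. Let $a$ be the largest arm entry of $(r,c)$, $\ell$ its largest leg entry, and $(a,\ell]\cap\mathsf L_T(r,c)$ the set of leg entries $x$ of $(r,c)$ with $a<x\le\ell$. In column $c+1$ find the smallest entry $\ge a$. If none exists, attach a new empty cell on top of column $c+1$, with row $\tilde r$, and let $k$ be empty; otherwise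 let $k$ be this entry and $(\tilde r,c+1)$ its cell. (a) If $\tilde r\ne r$: remove $a$ from the arm of $(r,c)$, put $a$ in the position of $k$ in $(\tilde r,c+1)$ (as hook entry if the cell is new), append $k$ (if nonempty) to the arm of $(\tilde r,c+1)$. (b) If $\tilde r=r$: move $(a,\ell]\cap\mathsf L_T(r,c)$ from the leg of $(r,c)$ into the leg of $(r,c+1)$, remove $a$ from the arm of $(r,c)$, replace the hook entry of $(r,c+1)$ by $a$, and append $k$ (if nonempty) to the arm of $(r,c+1)$. Uncrowding insertion: $\mathcal V(T)=\mathcal V_b^d(T)$ where $d\ge1$ is minimal such that $\mathsf{shape}(\mathcal V_b^d(T))\neq\mathsf{shape}(\mathcal V_b^{d-1}(T))$ or $\mathcal V_b^d(T)=\mathcal V_b^{d-1}(T)$. Uncrowding map: for $T\in\mathsf{HVT}(\lambda)$ with arm excess $\alpha$, set $P_0=T$ and $Q_0$ the empty tableau of shape $\lambda/\lambda$; for $1\le i\le\alpha$ let $P_i=\mathcal V(P_{i-1})$, let $c$ be the index of the rightmost column of $P_{i-1}$ containing a cell with nonzero arm excess and $\tilde c$ the column of the cell $\mathsf{shape}(P_i)/\mathsf{shape}(P_{i-1})$; $Q_i$ is $Q_{i-1}$ with this cell added and filled with $\tilde c-c$. Then $\mathcal U(T)=(P(T),Q(T)):=(P_\alpha,Q_\alpha)$. *)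

theory Defs
  imports Main "HOL-Library.Multiset"
begin

text \<open>A hook tableau: (hook entry x, leg as a set of strictly increasing entries,
  arm as a multiset of weakly increasing entries).  Order within leg/arm is determined
  by sortedness, so sets/multisets lose no information.\<close>
type_synonym hook = "nat \<times> nat set \<times> nat multiset"

definition hentry :: "hook \<Rightarrow> nat" where "hentry h = fst h"
definition hleg :: "hook \<Rightarrow> nat set" where "hleg h = fst (snd h)"
definition harm :: "hook \<Rightarrow> nat multiset" where "harm h = snd (snd h)"

definition hentries :: "hook \<Rightarrow> nat set" where
  "hentries h = {hentry h} \<union> hleg h \<union> set_mset (harm h)"

definition valid_hook :: "hook \<Rightarrow> bool" where
  "valid_hook h \<longleftrightarrow> 1 \<le> hentry h \<and> finite (hleg h) \<and>
     (\<forall>l\<in>hleg h. hentry h < l) \<and> (\<forall>a\<in>#harm h. hentry h \<le> a)"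

text \<open>A tableau maps cells (r,c) (row r, column c, both \<ge> 1) to hook tableaux.\<close>
type_synonym tableau = "nat \<times> nat \<Rightarrow> hook option"

definition cell :: "tableau \<Rightarrow> nat \<times> nat \<Rightarrow> hook" where
  "cell T p = the (T p)"

definition partition_shape :: "(nat \<times> nat) set \<Rightarrow> bool" where
  "partition_shape D \<longleftrightarrow> finite D \<and> (\<forall>(r,c)\<in>D. 1 \<le> r \<and> 1 \<le> c \<and>
     (\<forall>r' c'. 1 \<le> r' \<and> r' \<le> r \<and> 1 \<le> c' \<and> c' \<le> c \<longrightarrow> (r',c') \<in> D))"

definition is_HVT :: "tableau \<Rightarrow> bool" where
  "is_HVT T \<longleftrightarrow> partition_shape (dom T) \<and>
     (\<forall>p\<in>dom T. valid_hook (cell T p)) \<and>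
     (\<forall>r c c'. (r,c) \<in> dom T \<and> (r,c') \<in> dom T \<and> c < c' \<longrightarrow>
        Max (hentries (cell T (r,c))) \<le> Min (hentries (cell T (r,c')))) \<and>
     (\<forall>r r' c. (r,c) \<in> dom T \<and> (r',c) \<in> dom T \<and> r < r' \<longrightarrow>
        Max (hentries (cell T (r,c))) < Min (hentries (cell T (r',c))))"

definition arm_excess :: "tableau \<Rightarrow> nat" where
  "arm_excess T = (\<Sum>p\<in>dom T. size (harm (cell T p)))"

definition is_set_valued :: "tableau \<Rightarrow> bool" where
  "is_set_valued T \<longleftrightarrow> is_HVT T \<and> arm_excess T = 0"

definition arm_cells :: "tableau \<Rightarrow> (nat \<times> nat) set" where
  "arm_cells T = {p \<in> dom T. harm (cell T p) \<noteq> {#}}"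

definition bump_col :: "tableau \<Rightarrow> nat" where
  "bump_col T = Max (snd ` arm_cells T)"

definition bump_row :: "tableau \<Rightarrow> nat" where
  "bump_row T = fst (ARG_MAX (\<lambda>p. Max (set_mset (harm (cell T p)))) p.
                       p \<in> arm_cells T \<and> snd p = bump_col T)"

definition col_entries :: "tableau \<Rightarrow> nat \<Rightarrow> nat set" where
  "col_entries T c = \<Union> {hentries (cell T (r',c)) | r'. (r',c) \<in> dom T}"

definition replace_entry :: "nat \<Rightarrow> nat \<Rightarrow> hook \<Rightarrow> hook" where
  "replace_entry k a h =
     (if hentry h = k then (a, hleg h, harm h)
      else if k \<in> hleg h then (hentry h, insert a (hleg h - {k}), harm h)
      else (hentry h, hleg h, harm h - {#k#} + {#a#}))"

definition bump :: "tableau \<Rightarrow> tableau" where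
  "bump T = (if arm_excess T = 0 then T else
     let c = bump_col T; r = bump_row T; H = cell T (r,c);
         a = Max (set_mset (harm H));
         Lmove = {x \<in> hleg H. a < x};
         G = {e \<in> col_entries T (c+1). a \<le> e};
         kopt = (if G = {} then None else Some (Min G));
         rt = (case kopt of
                 None \<Rightarrow> Max (insert 0 {r'. (r',c+1) \<in> dom T}) + 1
               | Some k \<Rightarrow> (SOME r'. (r',c+1) \<in> dom T \<and> k \<in> hentries (cell T (r',c+1))))
     in if rt \<noteq> r then
          T((r,c) := Some (hentry H, hleg H, harm H - {#a#}),
            (rt,c+1) := Some (case kopt of
                None \<Rightarrow> (a, {}, {#})
              | Some k \<Rightarrow> (let h' = replace_entry k a (cell T (rt,c+1))
                           in (hentry h', hleg h', harm h' + {#k#}))))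
        else
          T((r,c) := Some (hentry H, hleg H - Lmove, harm H - {#a#}),
            (r,c+1) := Some (case kopt of
                None \<Rightarrow> (a, Lmove, {#})
              | Some k \<Rightarrow> (a, hleg (cell T (r,c+1)) \<union> Lmove,
                            harm (cell T (r,c+1)) + {#k#}))))"

definition uncrowd_insert :: "tableau \<Rightarrow> tableau" where
  "uncrowd_insert T =
     (let d = (LEAST d. 1 \<le> d \<and>
                 (dom ((bump ^^ d) T) \<noteq> dom ((bump ^^ (d-1)) T) \<or>
                  (bump ^^ d) T = (bump ^^ (d-1)) T))
      in (bump ^^ d) T)"

definition uncrowd_P :: "tableau \<Rightarrow> tableau" where
  "uncrowd_P T = (uncrowd_insert ^^ arm_excess T) T"

end

theory Submission imports Defs begin

abbreviation ent :: "tableau \<Rightarrow> nat \<times> nat \<Rightarrow> nat set" where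
  "ent T p \<equiv> hentries (cell T p)"
abbreviation hd0 :: "tableau \<Rightarrow> nat \<times> nat \<Rightarrow> nat" where
  "hd0 T p \<equiv> hentry (cell T p)"

lemma hentries_simp[simp]:
  "hentries (x, L, A) = insert x (L \<union> set_mset A)"
  by (auto simp: hentries_def hentry_def hleg_def harm_def)

lemma hook_sel[simp]: "hentry (x,L,A) = x" "hleg (x,L,A) = L" "harm (x,L,A) = A"
  by (auto simp: hentry_def hleg_def harm_def)

lemma valid_hook_simp: "valid_hook (x,L,A) \<longleftrightarrow> 1 \<le> x \<and> finite L \<and> (\<forall>l\<in>L. x < l) \<and> (\<forall>a\<in>#A. x \<le> a)"
  by (simp add: valid_hook_def)

lemma valid_fin: "valid_hook h \<Longrightarrow> finite (hentries h)"
  by (auto simp: valid_hook_def hentries_def)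

lemma hentry_in: "hentry h \<in> hentries h"
  by (auto simp: hentries_def)

lemma hentries_ne[simp]: "hentries h \<noteq> {}"
  using hentry_in by blast

lemma valid_ge: "valid_hook h \<Longrightarrow> x \<in> hentries h \<Longrightarrow> hentry h \<le> x"
  by (auto simp: valid_hook_def hentries_def)

lemma valid_Min: "valid_hook h \<Longrightarrow> Min (hentries h) = hentry h"
  by (meson Min_eqI hentry_in valid_fin valid_ge)

lemma HVT_iff: "is_HVT T \<longleftrightarrow> partition_shape (dom T) \<and>
     (\<forall>p\<in>dom T. valid_hook (cell T p)) \<and>
     (\<forall>r c c'. (r,c) \<in> dom T \<and> (r,c') \<in> dom T \<and> c < c' \<longrightarrow>
        (\<forall>x\<in>ent T (r,c). x \<le> hd0 T (r,c'))) \<and>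
     (\<forall>r r' c. (r,c) \<in> dom T \<and> (r',c) \<in> dom T \<and> r < r' \<longrightarrow>
        (\<forall>x\<in>ent T (r,c). x < hd0 T (r',c)))"
proof -
  have A: "Max (ent T p) \<le> Min (ent T q) \<longleftrightarrow> (\<forall>x\<in>ent T p. x \<le> hd0 T q)"
    if "valid_hook (cell T p)" "valid_hook (cell T q)" for p q
    using that by (subst Max_le_iff) (auto simp: valid_Min valid_fin hentry_in)
  have B: "Max (ent T p) < Min (ent T q) \<longleftrightarrow> (\<forall>x\<in>ent T p. x < hd0 T q)"
    if "valid_hook (cell T p)" "valid_hook (cell T q)" for p q
    using that by (subst Max_less_iff) (auto simp: valid_Min valid_fin hentry_in)
  show ?thesis unfolding is_HVT_def
  proof (intro iffI; elim conjE; intro conjI)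
    assume v: "\<forall>p\<in>dom T. valid_hook (cell T p)"
    { assume h: "\<forall>r c c'. (r, c) \<in> dom T \<and> (r, c') \<in> dom T \<and> c < c' \<longrightarrow> Max (ent T (r, c)) \<le> Min (ent T (r, c'))"
      show "\<forall>r c c'. (r,c) \<in> dom T \<and> (r,c') \<in> dom T \<and> c < c' \<longrightarrow> (\<forall>x\<in>ent T (r,c). x \<le> hd0 T (r,c'))"
      proof (intro allI impI)
        fix r c c' assume "(r,c) \<in> dom T \<and> (r,c') \<in> dom T \<and> c < c'"
        then show "\<forall>x\<in>ent T (r,c). x \<le> hd0 T (r,c')" using h v A by metis
      qed }
    { assume h: "\<forall>r r' c. (r, c) \<in> dom T \<and> (r', c) \<in> dom T \<and> r < r' \<longrightarrow> Max (ent T (r, c)) < Min (ent T (r', c))"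
      show "\<forall>r r' c. (r,c) \<in> dom T \<and> (r',c) \<in> dom T \<and> r < r' \<longrightarrow> (\<forall>x\<in>ent T (r,c). x < hd0 T (r',c))"
      proof (intro allI impI)
        fix r r' c assume "(r,c) \<in> dom T \<and> (r',c) \<in> dom T \<and> r < r'"
        then show "\<forall>x\<in>ent T (r,c). x < hd0 T (r',c)" using h v B by metis
      qed }
  next
    assume v: "\<forall>p\<in>dom T. valid_hook (cell T p)"
    { assume h: "\<forall>r c c'. (r,c) \<in> dom T \<and> (r,c') \<in> dom T \<and> c < c' \<longrightarrow> (\<forall>x\<in>ent T (r,c). x \<le> hd0 T (r,c'))"
      show "\<forall>r c c'. (r, c) \<in> dom T \<and> (r, c') \<in> dom T \<and> c < c' \<longrightarrow> Max (ent T (r, c)) \<le> Min (ent T (r, c'))"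
      proof (intro allI impI)
        fix r c c' assume "(r,c) \<in> dom T \<and> (r,c') \<in> dom T \<and> c < c'"
        then show "Max (ent T (r, c)) \<le> Min (ent T (r, c'))" using h v A by metis
      qed }
    { assume h: "\<forall>r r' c. (r,c) \<in> dom T \<and> (r',c) \<in> dom T \<and> r < r' \<longrightarrow> (\<forall>x\<in>ent T (r,c). x < hd0 T (r',c))"
      show "\<forall>r r' c. (r, c) \<in> dom T \<and> (r', c) \<in> dom T \<and> r < r' \<longrightarrow> Max (ent T (r, c)) < Min (ent T (r', c))"
      proof (intro allI impI)
        fix r r' c assume "(r,c) \<in> dom T \<and> (r',c) \<in> dom T \<and> r < r'"
        then show "Max (ent T (r, c)) < Min (ent T (r', c))" using h v B by metis
      qed }
  qed
qed


lemma HVT_upd2: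
  assumes HVT: "is_HVT T" and p1: "p1 \<in> dom T" and ne: "p1 \<noteq> p2"
  and T': "T' = T(p1 := Some h1, p2 := Some h2)"
  and v1: "valid_hook h1" and v2: "valid_hook h2"
  and e1: "hentry h1 = hd0 T p1" and s1: "hentries h1 \<subseteq> ent T p1"
  and ps: "partition_shape (dom T')"
  and L: "\<And>c'. (fst p2, c') \<in> dom T' \<Longrightarrow> c' < snd p2 \<Longrightarrow> \<forall>x\<in>ent T' (fst p2,c'). x \<le> hentry h2"
  and R: "\<And>c'. (fst p2, c') \<in> dom T' \<Longrightarrow> snd p2 < c' \<Longrightarrow> \<forall>x\<in>hentries h2. x \<le> hd0 T' (fst p2, c')"
  and B: "\<And>r'. (r', snd p2) \<in> dom T' \<Longrightarrow> r' < fst p2 \<Longrightarrow> \<forall>x\<in>ent T' (r', snd p2). x < hentry h2"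
  and A: "\<And>r'. (r', snd p2) \<in> dom T' \<Longrightarrow> fst p2 < r' \<Longrightarrow> \<forall>x\<in>hentries h2. x < hd0 T' (r', snd p2)"
  shows "is_HVT T'"
proof -
  have H: "partition_shape (dom T)" "\<forall>p\<in>dom T. valid_hook (cell T p)"
     "\<And>r c c'. (r,c) \<in> dom T \<Longrightarrow> (r,c') \<in> dom T \<Longrightarrow> c < c' \<Longrightarrow> (\<forall>x\<in>ent T (r,c). x \<le> hd0 T (r,c'))"
     "\<And>r r' c. (r,c) \<in> dom T \<Longrightarrow> (r',c) \<in> dom T \<Longrightarrow> r < r' \<Longrightarrow> (\<forall>x\<in>ent T (r,c). x < hd0 T (r',c))"
    using HVT unfolding HVT_iff by blast+
  have dT: "dom T' = insert p2 (dom T)" using T' p1 by auto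
  have c2: "cell T' p2 = h2" using T' by (simp add: cell_def)
  have sub: "ent T' q \<subseteq> ent T q" if "q \<noteq> p2" for q
    using T' that s1 by (auto simp: cell_def)
  have hq: "hd0 T' q = hd0 T q" if "q \<noteq> p2" for q
    using T' that e1 by (auto simp: cell_def)
  have vq: "valid_hook (cell T' q)" if "q \<in> dom T'" for q
  proof (cases "q = p2")
    case True then show ?thesis using c2 v2 by simp
  next
    case False
    show ?thesis proof (cases "q = p1")
      case True then show ?thesis using T' v1 False by (simp add: cell_def)
    next
      case F2: False
      then have "cell T' q = cell T q" using T' False by (simp add: cell_def)
      moreover have "q \<in> dom T" using that dT False by auto
      ultimately show ?thesis using H(2) by simp
    qed
  qed
  show ?thesis unfolding HVT_iff
  proof (intro conjI ps ballI vq allI impI)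
    fix r c c' x assume a: "(r, c) \<in> dom T' \<and> (r, c') \<in> dom T' \<and> c < c'" and x: "x \<in> ent T' (r, c)"
    show "x \<le> hd0 T' (r, c')"
    proof (cases "(r,c) = p2")
      case True
      then have "(r,c') \<noteq> p2" using a by auto
      have "\<forall>y\<in>hentries h2. y \<le> hd0 T' (r,c')" using R[of c'] a True by (metis fst_conv snd_conv)
      then show ?thesis using x True c2 by blast
    next
      case F: False
      show ?thesis proof (cases "(r,c') = p2")
        case True
        have "\<forall>y\<in>ent T' (r,c). y \<le> hentry h2" using L[of c] a True by (metis fst_conv snd_conv)
        then show ?thesis using x True c2 by blast
      next
        case False
        have "(r,c) \<in> dom T" "(r,c') \<in> dom T" using a F False dT by auto
        then have "x \<le> hd0 T (r,c')" using H(3) a x sub[OF F] by blast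
        then show ?thesis using hq[OF False] by simp
      qed
    qed
  next
    fix r r' c x assume a: "(r, c) \<in> dom T' \<and> (r', c) \<in> dom T' \<and> r < r'" and x: "x \<in> ent T' (r, c)"
    show "x < hd0 T' (r', c)"
    proof (cases "(r,c) = p2")
      case True
      then have "(r',c) \<noteq> p2" using a by auto
      have "\<forall>y\<in>hentries h2. y < hd0 T' (r',c)" using A[of r'] a True by (metis fst_conv snd_conv)
      then show ?thesis using x True c2 by blast
    next
      case F: False
      show ?thesis proof (cases "(r',c) = p2")
        case True
        have "\<forall>y\<in>ent T' (r,c). y < hentry h2" using B[of r] a True by (metis fst_conv snd_conv)
        then show ?thesis using x True c2 by blast
      next
        case False
        have "(r,c) \<in> dom T" "(r',c) \<in> dom T" using a F False dT by auto
        then have "x < hd0 T (r',c)" using H(4) a x sub[OF F] by blast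
        then show ?thesis using hq[OF False] by simp
      qed
    qed
  qed
qed


lemma excess_upd2:
  assumes fin: "finite (dom T)" and p1: "p1 \<in> dom T" and ne: "p1 \<noteq> p2"
  shows "arm_excess (T(p1 := Some h1, p2 := Some h2)) + size (harm (cell T p1))
     + (if p2 \<in> dom T then size (harm (cell T p2)) else 0)
     = arm_excess T + size (harm h1) + size (harm h2)"
proof -
  define T' where "T' = T(p1 := Some h1, p2 := Some h2)"
  define S where "S = dom T - {p1, p2}"
  have finS: "finite S" using fin S_def by auto
  have d': "dom T' = insert p1 (insert p2 S)" using p1 unfolding T'_def S_def by auto
  have eqS: "(\<Sum>p\<in>S. size (harm (cell T' p))) = (\<Sum>p\<in>S. size (harm (cell T p)))"
    by (rule sum.cong) (auto simp: S_def T'_def cell_def)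
  have "arm_excess T' = size (harm h1) + size (harm h2) + (\<Sum>p\<in>S. size (harm (cell T p)))"
  proof -
    have "p1 \<notin> S" "p2 \<notin> S" by (auto simp: S_def)
    then show ?thesis unfolding arm_excess_def d' using finS ne eqS
      by (simp add: T'_def cell_def)
  qed
  moreover have "arm_excess T = size (harm (cell T p1)) + (if p2 \<in> dom T then size (harm (cell T p2)) else 0) + (\<Sum>p\<in>S. size (harm (cell T p)))"
  proof (cases "p2 \<in> dom T")
    case True
    have dd: "dom T = insert p1 (insert p2 S)" using p1 S_def True by auto
    have "p1 \<notin> S" "p2 \<notin> S" by (auto simp: S_def)
    then show ?thesis unfolding arm_excess_def dd using finS ne True by simp
  next
    case False
    have dd: "dom T = insert p1 S" using p1 S_def False by auto
    have "p1 \<notin> S" "p2 \<notin> S" by (auto simp: S_def)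
    then show ?thesis unfolding arm_excess_def dd using finS ne False by simp
  qed
  ultimately show ?thesis unfolding T'_def by simp
qed


lemma ps_insert:
  assumes ps: "partition_shape D" and i: "1 \<le> i" and j: "1 \<le> j"
  and below: "\<And>r' c'. 1 \<le> r' \<Longrightarrow> r' \<le> i \<Longrightarrow> 1 \<le> c' \<Longrightarrow> c' \<le> j \<Longrightarrow> (r',c') \<noteq> (i,j) \<Longrightarrow> (r',c') \<in> D"
  shows "partition_shape (insert (i,j) D)"
  unfolding partition_shape_def
proof (intro conjI ballI)
  show "finite (insert (i, j) D)" using ps unfolding partition_shape_def by simp
next
  fix p assume p: "p \<in> insert (i,j) D"
  obtain r c where pe: "p = (r,c)" by fastforce
  show "case p of (r, c) \<Rightarrow> 1 \<le> r \<and> 1 \<le> c \<and> (\<forall>r' c'. 1 \<le> r' \<and> r' \<le> r \<and> 1 \<le> c' \<and> c' \<le> c \<longrightarrow> (r', c') \<in> insert (i, j) D)"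
  proof (cases "p = (i,j)")
    case True
    then show ?thesis using i j below by auto
  next
    case False
    then have "(r,c) \<in> D" using p pe by blast
    then have "1 \<le> r \<and> 1 \<le> c \<and> (\<forall>r' c'. 1 \<le> r' \<and> r' \<le> r \<and> 1 \<le> c' \<and> c' \<le> c \<longrightarrow> (r', c') \<in> D)"
      using ps unfolding partition_shape_def by blast
    then show ?thesis using pe by auto
  qed
qed

lemma ps_down:
  assumes "partition_shape D" "(r,c) \<in> D" "1 \<le> r'" "r' \<le> r" "1 \<le> c'" "c' \<le> c"
  shows "(r',c') \<in> D"
  using assms unfolding partition_shape_def by blast

lemma ps_pos:
  assumes "partition_shape D" "(r,c) \<in> D"
  shows "1 \<le> r" "1 \<le> c"
  using assms unfolding partition_shape_def by blast+

lemma step_HVT: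
  assumes HVT: "is_HVT T"
  and rc: "(r,c) \<in> dom T" and rt_le: "rt \<le> r" and rt1: "1 \<le> rt"
  and T': "T' = T((r,c) := Some h1, (rt,Suc c) := Some h2)"
  and v1: "valid_hook h1" and e1: "hentry h1 = hd0 T (r,c)" and s1: "hentries h1 \<subseteq> ent T (r,c)"
  and s1r: "rt = r \<Longrightarrow> \<forall>x\<in>hentries h1. x \<le> a"
  and aH: "hd0 T (r,c) \<le> a"
  and v2: "valid_hook h2"
  and lowA: "\<And>r'. (r', Suc c) \<in> dom T \<Longrightarrow> r' < rt \<Longrightarrow> \<forall>x\<in>ent T (r', Suc c). x < a"
  and hh2: "hentry h2 = a \<or> ((rt,Suc c) \<in> dom T \<and> hentry h2 = hd0 T (rt, Suc c))"
  and dom2: "(rt,Suc c) \<in> dom T \<Longrightarrow> \<forall>x\<in>hentries h2. \<exists>y\<in>ent T (rt,Suc c). x \<le> y"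
  and new: "(rt,Suc c) \<notin> dom T \<Longrightarrow> (\<forall>r'. (r',Suc c) \<in> dom T \<longleftrightarrow> 1 \<le> r' \<and> r' < rt)"
  shows "is_HVT T'"
proof -
  have ps: "partition_shape (dom T)" and vT: "\<And>p. p\<in>dom T \<Longrightarrow> valid_hook (cell T p)"
   and Hrow: "\<And>r c c'. (r,c) \<in> dom T \<Longrightarrow> (r,c') \<in> dom T \<Longrightarrow> c < c' \<Longrightarrow> (\<forall>x\<in>ent T (r,c). x \<le> hd0 T (r,c'))"
   and Hcol: "\<And>r r' c. (r,c) \<in> dom T \<Longrightarrow> (r',c) \<in> dom T \<Longrightarrow> r < r' \<Longrightarrow> (\<forall>x\<in>ent T (r,c). x < hd0 T (r',c))"
    using HVT unfolding HVT_iff by blast+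
  have ne: "(r,c) \<noteq> (rt, Suc c)" by simp
  have dT': "dom T' = insert (rt,Suc c) (dom T)" using T' rc by auto
  have same: "cell T' q = cell T q" if "q \<noteq> (r,c)" "q \<noteq> (rt,Suc c)" for q
    using T' that by (simp add: cell_def)
  have c1: "cell T' (r,c) = h1" using T' by (simp add: cell_def)
  show ?thesis
  proof (rule HVT_upd2[OF HVT rc ne T' v1 v2 e1 s1])
    show "partition_shape (dom T')"
    proof (cases "(rt,Suc c) \<in> dom T")
      case True then show ?thesis using dT' ps by (simp add: insert_absorb)
    next
      case False
      have "partition_shape (insert (rt,Suc c) (dom T))"
      proof (rule ps_insert[OF ps rt1])
        fix r' c' assume a: "1 \<le> r'" "r' \<le> rt" "1 \<le> c'" "c' \<le> Suc c" "(r', c') \<noteq> (rt, Suc c)"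
        show "(r', c') \<in> dom T"
        proof (cases "c' = Suc c")
          case True then have "r' < rt" using a by auto
          then show ?thesis using new[OF False] True a by auto
        next
          case F: False
          then show ?thesis using ps_down[OF ps rc, of r' c'] a rt_le by auto
        qed
      qed simp
      then show ?thesis using dT' by simp
    qed
  next
    fix c' assume a: "(fst (rt, Suc c), c') \<in> dom T'" "c' < snd (rt, Suc c)"
    then have a': "(rt,c') \<in> dom T" "c' \<le> c" using dT' by auto
    show "\<forall>x\<in>ent T' (fst (rt, Suc c), c'). x \<le> hentry h2"
    proof
      fix x assume x: "x \<in> ent T' (fst (rt, Suc c), c')"
      have bound: "x \<le> a \<and> ((rt,Suc c) \<in> dom T \<longrightarrow> x \<le> hd0 T (rt,Suc c))"
      proof (cases "rt = r")
        case True
        show ?thesis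
        proof (cases "c' = c")
          case True
          then have xx: "x \<in> hentries h1" using x c1 \<open>rt = r\<close> by simp
          then have "x \<le> a" using s1r[OF \<open>rt = r\<close>] by blast
          moreover have "(rt,Suc c) \<in> dom T \<longrightarrow> x \<le> hd0 T (rt,Suc c)"
            using Hrow[OF rc, of "Suc c"] s1 xx \<open>rt = r\<close> by auto
          ultimately show ?thesis by blast
        next
          case False
          then have cc: "c' < c" using a' by simp
          have xT: "x \<in> ent T (rt,c')" using x same[of "(rt,c')"] False a' by simp
          have "x \<le> hd0 T (r,c)" using Hrow[OF a'(1), of c] cc xT rc True by auto
          moreover have "(rt,Suc c) \<in> dom T \<longrightarrow> x \<le> hd0 T (rt,Suc c)"
            using Hrow[OF a'(1), of "Suc c"] cc xT by auto
          ultimately show ?thesis using aH by auto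
        qed
      next
        case False
        then have lt: "rt < r" using rt_le by simp
        have xT: "x \<in> ent T (rt,c')" using x same[of "(rt,c')"] False a' by simp
        have rtc: "(rt,c) \<in> dom T" using ps_down[OF ps rc rt1 rt_le] ps_pos[OF ps rc] by simp
        have "x < hd0 T (r,c)"
        proof (cases "c' = c")
          case True then show ?thesis using xT Hcol[OF rtc rc lt] by blast
        next
          case False
          then have "x \<le> hd0 T (rt,c)" using Hrow[OF a'(1) rtc] a' xT by auto
          also have "\<dots> < hd0 T (r,c)" using Hcol[OF rtc rc lt] hentry_in by blast
          finally show ?thesis .
        qed
        then have "x \<le> a" using aH by simp
        moreover have "(rt,Suc c) \<in> dom T \<longrightarrow> x \<le> hd0 T (rt,Suc c)"
          using Hrow[OF a'(1), of "Suc c"] a' xT by auto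
        ultimately show ?thesis by blast
      qed
      then show "x \<le> hentry h2" using hh2 by auto
    qed
  next
    fix c' assume a: "(fst (rt, Suc c), c') \<in> dom T'" "snd (rt, Suc c) < c'"
    then have a': "(rt,c') \<in> dom T" "Suc c < c'" using dT' by auto
    then have in2: "(rt,Suc c) \<in> dom T" using ps_down[OF ps a'(1), of rt "Suc c"] rt1 by auto
    have "hd0 T' (rt,c') = hd0 T (rt,c')" using same[of "(rt,c')"] a' by simp
    show "\<forall>x\<in>hentries h2. x \<le> hd0 T' (fst (rt, Suc c), c')"
    proof
      fix x assume "x \<in> hentries h2"
      then obtain y where y: "y \<in> ent T (rt,Suc c)" "x \<le> y" using dom2[OF in2] by blast
      have "y \<le> hd0 T (rt, c')" using Hrow[OF in2 a'(1)] a'(2) y(1) by blast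
      then show "x \<le> hd0 T' (fst (rt, Suc c), c')" using y(2) \<open>hd0 T' (rt,c') = hd0 T (rt,c')\<close> by simp
    qed
  next
    fix r' assume a: "(r', snd (rt, Suc c)) \<in> dom T'" "r' < fst (rt, Suc c)"
    then have a': "(r',Suc c) \<in> dom T" "r' < rt" using dT' by auto
    have cc: "cell T' (r', Suc c) = cell T (r', Suc c)" using same a' by simp
    show "\<forall>x\<in>ent T' (r', snd (rt, Suc c)). x < hentry h2"
    proof
      fix x assume "x \<in> ent T' (r', snd (rt, Suc c))"
      then have x: "x \<in> ent T (r', Suc c)" using cc by simp
      have "x < a" using lowA[OF a'] x by blast
      moreover have "(rt,Suc c) \<in> dom T \<longrightarrow> x < hd0 T (rt,Suc c)"
        using Hcol[OF a'(1), of rt] a' x by auto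
      ultimately show "x < hentry h2" using hh2 by auto
    qed
  next
    fix r' assume a: "(r', snd (rt, Suc c)) \<in> dom T'" "fst (rt, Suc c) < r'"
    then have a': "(r',Suc c) \<in> dom T" "rt < r'" using dT' by auto
    have cc: "hd0 T' (r', Suc c) = hd0 T (r', Suc c)" using same a' by simp
    have in2: "(rt,Suc c) \<in> dom T"
    proof (rule ccontr)
      assume "(rt, Suc c) \<notin> dom T"
      then have "r' < rt" using new a'(1) by blast
      then show False using a'(2) by simp
    qed
    show "\<forall>x\<in>hentries h2. x < hd0 T' (r', snd (rt, Suc c))"
    proof
      fix x assume "x \<in> hentries h2"
      then obtain y where y: "y \<in> ent T (rt,Suc c)" "x \<le> y" using dom2[OF in2] by blast
      have "y < hd0 T (r', Suc c)" using Hcol[OF in2 a'(1) a'(2)] y(1) by blast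
      then show "x < hd0 T' (r', snd (rt, Suc c))" using y(2) cc by simp
    qed
  qed
qed


lemma bump_col_next:
  assumes fin: "finite (dom T)" and rc: "(r,c) \<in> dom T" and rt: "(rt, Suc c) \<in> dom T"
  and cm: "\<forall>p\<in>arm_cells T. snd p \<le> c"
  and T': "T' = T((r,c) := Some h1, (rt, Suc c) := Some h2)"
  and h2: "harm h2 \<noteq> {#}"
  shows "bump_col T' = Suc c"
proof -
  have dT': "dom T' = dom T" using T' rc rt by auto
  have in2: "(rt, Suc c) \<in> arm_cells T'" using T' h2 dT' rt by (simp add: arm_cells_def cell_def)
  have le: "snd p \<le> Suc c" if "p \<in> arm_cells T'" for p
  proof (cases "p = (r,c) \<or> p = (rt, Suc c)")
    case True then show ?thesis by auto
  next
    case False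
    then have "cell T' p = cell T p" using T' by (auto simp: cell_def)
    then have "p \<in> arm_cells T" using that dT' by (simp add: arm_cells_def)
    then show ?thesis using cm by fastforce
  qed
  have "finite (arm_cells T')" using fin dT' unfolding arm_cells_def by simp
  then show ?thesis unfolding bump_col_def
    using in2 le by (intro Max_eqI) (auto, force)
qed

lemma excess_pos_cells:
  assumes "finite (dom T)" "arm_excess T \<noteq> 0"
  shows "arm_cells T \<noteq> {}"
  using assms unfolding arm_excess_def arm_cells_def by (auto simp: sum_eq_0_iff)


lemma bump_main:
  assumes HVT: "is_HVT T" and ex: "arm_excess T \<noteq> 0"
  shows "is_HVT (bump T) \<and>
    ((dom (bump T) \<noteq> dom T \<and> arm_excess (bump T) = arm_excess T - 1) \<or>
     (dom (bump T) = dom T \<and> bump T \<noteq> T \<and> arm_excess (bump T) = arm_excess T \<and>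
      bump_col (bump T) = Suc (bump_col T)))"
proof -
  have ps: "partition_shape (dom T)" and vT: "\<And>p. p\<in>dom T \<Longrightarrow> valid_hook (cell T p)"
   and Hrow: "\<And>r c c'. (r,c) \<in> dom T \<Longrightarrow> (r,c') \<in> dom T \<Longrightarrow> c < c' \<Longrightarrow> (\<forall>x\<in>ent T (r,c). x \<le> hd0 T (r,c'))"
   and Hcol: "\<And>r r' c. (r,c) \<in> dom T \<Longrightarrow> (r',c) \<in> dom T \<Longrightarrow> r < r' \<Longrightarrow> (\<forall>x\<in>ent T (r,c). x < hd0 T (r',c))"
    using HVT unfolding HVT_iff by blast+
  have fin: "finite (dom T)" using ps unfolding partition_shape_def by simp
  have AC: "arm_cells T \<noteq> {}" using excess_pos_cells[OF fin ex] .
  have finAC: "finite (arm_cells T)" using fin unfolding arm_cells_def by simp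
  define c where "c = bump_col T"
  have cin: "c \<in> snd ` arm_cells T" unfolding c_def bump_col_def using AC finAC by (intro Max_in) auto
  have cm: "\<forall>p\<in>arm_cells T. snd p \<le> c" unfolding c_def bump_col_def using finAC by auto
  define f where "f = (\<lambda>p. Max (set_mset (harm (cell T p))))"
  define P where "P = (\<lambda>p. p \<in> arm_cells T \<and> snd p = c)"
  define p0 where "p0 = arg_max f P"
  obtain k0 where k0: "P k0" using cin P_def by auto
  have "P p0" unfolding p0_def
  proof (rule arg_max_natI[of P k0 f "Max (f ` arm_cells T) + 1"])
    show "P k0" by fact
    show "\<forall>y. P y \<longrightarrow> f y < Max (f ` arm_cells T) + 1"
      using finAC P_def by (simp add: le_imp_less_Suc)
  qed
  define r where "r = fst p0"
  have p0e: "p0 = (r,c)" using \<open>P p0\<close> P_def r_def by (cases p0) auto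
  have rc: "(r,c) \<in> dom T" and armne: "harm (cell T (r,c)) \<noteq> {#}"
    using \<open>P p0\<close> p0e unfolding P_def arm_cells_def by auto
  have r1: "1 \<le> r" and c1: "1 \<le> c" using ps_pos[OF ps rc] by auto
  define H where "H = cell T (r,c)"
  define a where "a = Max (set_mset (harm H))"
  have aH: "a \<in># harm H" unfolding a_def using armne H_def by (intro Max_in) auto
  have aM: "\<And>y. y \<in># harm H \<Longrightarrow> y \<le> a" unfolding a_def by simp
  have vH: "valid_hook H" using vT[OF rc] H_def by simp
  have haH: "hentry H \<le> a" using vH aH unfolding valid_hook_def by blast
  have a1: "1 \<le> a" using vH haH unfolding valid_hook_def by simp
  have aent: "a \<in> ent T (r,c)" using aH H_def by (simp add: hentries_def)
  define Lmove where "Lmove = {x \<in> hleg H. a < x}"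
  define G where "G = {e \<in> col_entries T (c+1). a \<le> e}"
  define kopt where "kopt = (if G = {} then None else Some (Min G))"
  define rt where "rt = (case kopt of
                 None \<Rightarrow> Max (insert 0 {r'. (r',c+1) \<in> dom T}) + 1
               | Some k \<Rightarrow> (SOME r'. (r',c+1) \<in> dom T \<and> k \<in> hentries (cell T (r',c+1))))"
  have rowe: "bump_row T = r" unfolding bump_row_def r_def p0_def f_def P_def c_def by simp
  have bumpeq: "bump T = (if rt \<noteq> r then
          T((r,c) := Some (hentry H, hleg H, harm H - {#a#}),
            (rt,c+1) := Some (case kopt of
                None \<Rightarrow> (a, {}, {#})
              | Some k \<Rightarrow> (let h' = replace_entry k a (cell T (rt,c+1))
                           in (hentry h', hleg h', harm h' + {#k#}))))
        else
          T((r,c) := Some (hentry H, hleg H - Lmove, harm H - {#a#}),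
            (r,c+1) := Some (case kopt of
                None \<Rightarrow> (a, Lmove, {#})
              | Some k \<Rightarrow> (a, hleg (cell T (r,c+1)) \<union> Lmove,
                            harm (cell T (r,c+1)) + {#k#}))))"
    unfolding bump_def Let_def rowe c_def[symmetric] H_def[symmetric] a_def[symmetric]
      Lmove_def[symmetric] G_def[symmetric] kopt_def[symmetric] rt_def[symmetric]
    using ex by simp
  have CE: "x \<in> col_entries T (c+1) \<longleftrightarrow> (\<exists>r'. (r',c+1) \<in> dom T \<and> x \<in> ent T (r',c+1))" for x
    unfolding col_entries_def by blast
  have finCE: "finite (col_entries T (c+1))"
  proof -
    have "col_entries T (c+1) = \<Union> ((\<lambda>r'. ent T (r',c+1)) ` {r'. (r',c+1) \<in> dom T})"
      unfolding col_entries_def by blast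
    moreover have "finite {r'. (r',c+1) \<in> dom T}"
    proof -
      have "{r'. (r',c+1) \<in> dom T} \<subseteq> fst ` dom T" by force
      then show ?thesis using fin finite_subset by blast
    qed
    moreover have "\<And>r'. (r',c+1) \<in> dom T \<Longrightarrow> finite (ent T (r',c+1))" using vT valid_fin by blast
    ultimately show ?thesis by auto
  qed
  have KEY1: "(r,c+1) \<in> dom T \<Longrightarrow> a \<le> hd0 T (r,c+1)" using Hrow[OF rc, of "c+1"] aent by auto
  define h1a where "h1a = (hentry H, hleg H, harm H - {#a#})"
  define h1b where "h1b = (hentry H, hleg H - Lmove, harm H - {#a#})"
  have v1a: "valid_hook h1a" using vH unfolding h1a_def valid_hook_def by (auto dest: in_diffD)
  have v1b: "valid_hook h1b" using vH unfolding h1b_def valid_hook_def by (auto dest: in_diffD)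
  have e1a: "hentry h1a = hd0 T (r,c)" and e1b: "hentry h1b = hd0 T (r,c)"
    unfolding h1a_def h1b_def H_def by simp_all
  have s1a: "hentries h1a \<subseteq> ent T (r,c)" and s1b: "hentries h1b \<subseteq> ent T (r,c)"
    unfolding h1a_def h1b_def H_def by (auto simp: hentries_def hentry_def hleg_def harm_def dest: in_diffD)
  have s1rb: "\<forall>x\<in>hentries h1b. x \<le> a"
    unfolding h1b_def Lmove_def using haH aM by (auto dest: in_diffD)
  have sz1: "size (harm h1a) = size (harm H) - 1" "size (harm h1b) = size (harm H) - 1"
    unfolding h1a_def h1b_def using aH by (simp_all add: size_Diff_singleton)
  have szH: "size (harm H) \<ge> 1" using aH
  proof -
    have "harm H \<noteq> {#}" using aH by auto
    then show ?thesis using nonempty_has_size by (metis Suc_le_eq One_nat_def)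
  qed
  have aHd: "hd0 T (r,c) \<le> a" using haH H_def by simp
  have neq1a: "T (r,c) \<noteq> Some h1a"
  proof
    assume "T (r,c) = Some h1a"
    then have "H = h1a" unfolding H_def cell_def by simp
    then have "harm H = harm H - {#a#}" unfolding h1a_def by (metis hook_sel(3))
    then have "size (harm H) = size (harm H) - 1" using aH by (metis size_Diff_singleton)
    then show False using szH by simp
  qed
  have neq1b: "T (r,c) \<noteq> Some h1b"
  proof
    assume "T (r,c) = Some h1b"
    then have "H = h1b" unfolding H_def cell_def by simp
    then have "harm H = harm H - {#a#}" unfolding h1b_def by (metis hook_sel(3))
    then have "size (harm H) = size (harm H) - 1" using aH by (metis size_Diff_singleton)
    then show False using szH by simp
  qed
  show ?thesis
  proof (cases "G = {}")
    case Gempty: True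
    have kN: "kopt = None" using Gempty kopt_def by simp
    have NoBig: "\<And>r' x. (r',c+1) \<in> dom T \<Longrightarrow> x \<in> ent T (r',c+1) \<Longrightarrow> x < a"
    proof (rule ccontr)
      fix r' x assume "(r',c+1) \<in> dom T" "x \<in> ent T (r',c+1)" "\<not> x < a"
      then have "x \<in> G" unfolding G_def using CE by auto
      then show False using Gempty by simp
    qed
    define R1 where "R1 = {r'. (r',c+1) \<in> dom T}"
    have finR1: "finite R1"
    proof -
      have "R1 \<subseteq> fst ` dom T" unfolding R1_def by force
      then show ?thesis using fin finite_subset by blast
    qed
    have rte: "rt = Max (insert 0 R1) + 1" using kN rt_def R1_def by simp
    have new: "\<forall>r'. (r',Suc c) \<in> dom T \<longleftrightarrow> 1 \<le> r' \<and> r' < rt"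
    proof (intro allI iffI)
      fix r' assume a: "(r', Suc c) \<in> dom T"
      then have "r' \<in> R1" unfolding R1_def by simp
      then have "r' \<le> Max (insert 0 R1)" using finR1 by simp
      then show "1 \<le> r' \<and> r' < rt" using rte ps_pos[OF ps a] by simp
    next
      fix r' assume a: "1 \<le> r' \<and> r' < rt"
      define m where "m = Max (insert 0 R1)"
      have "m \<in> insert 0 R1" unfolding m_def using finR1 by (intro Max_in) auto
      moreover have "m \<noteq> 0" using a rte m_def by simp
      ultimately have "m \<in> R1" by simp
      then have "(m, Suc c) \<in> dom T" unfolding R1_def by simp
      then show "(r', Suc c) \<in> dom T" using ps_down[OF ps, of m "Suc c" r' "Suc c"] a rte m_def by simp
    qed
    have rtnot: "(rt, Suc c) \<notin> dom T" using new by simp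
    have rt1: "1 \<le> rt" using rte by simp
    have rt_le: "rt \<le> r"
    proof (rule ccontr)
      assume "\<not> rt \<le> r"
      then have "(r, Suc c) \<in> dom T" using new r1 by simp
      then show False using KEY1 NoBig[of r "hd0 T (r,c+1)"] hentry_in by fastforce
    qed
    have lowA: "\<And>r'. (r', Suc c) \<in> dom T \<Longrightarrow> r' < rt \<Longrightarrow> \<forall>x\<in>ent T (r', Suc c). x < a"
      using NoBig by simp
    show ?thesis
    proof (cases "rt = r")
      case False
      define T' where "T' = T((r,c) := Some h1a, (rt,Suc c) := Some (a,{},{#}))"
      have bT: "bump T = T'" using bumpeq False kN unfolding T'_def h1a_def by simp
      have HT': "is_HVT T'"
        by (rule step_HVT[OF HVT rc rt_le rt1 T'_def v1a e1a s1a _ aHd])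
           (use False lowA rtnot new a1 in \<open>auto simp: valid_hook_def\<close>)
      have "arm_excess T' + size (harm (cell T (r,c))) + 0 = arm_excess T + (size (harm H) - 1) + 0"
        using excess_upd2[OF fin rc, of "(rt,Suc c)" h1a "(a,{},{#})"] rtnot sz1 unfolding T'_def by simp
      then have "arm_excess T' = arm_excess T - 1" using szH H_def by simp
      moreover have "dom T' \<noteq> dom T" using rtnot unfolding T'_def by auto
      ultimately show ?thesis using HT' bT by simp
    next
      case True
      define T' where "T' = T((r,c) := Some h1b, (rt,Suc c) := Some (a,Lmove,{#}))"
      have bT: "bump T = T'" using bumpeq True kN unfolding T'_def h1b_def by simp
      have finL: "finite Lmove" using vH unfolding Lmove_def valid_hook_def by simp
      have HT': "is_HVT T'"
        by (rule step_HVT[OF HVT rc rt_le rt1 T'_def v1b e1b s1b _ aHd])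
           (use True lowA rtnot new a1 s1rb finL in \<open>auto simp: valid_hook_def Lmove_def\<close>)
      have "arm_excess T' + size (harm (cell T (r,c))) + 0 = arm_excess T + (size (harm H) - 1) + 0"
        using excess_upd2[OF fin rc, of "(rt,Suc c)" h1b "(a,Lmove,{#})"] rtnot sz1 unfolding T'_def by simp
      then have "arm_excess T' = arm_excess T - 1" using szH H_def by simp
      moreover have "dom T' \<noteq> dom T" using rtnot unfolding T'_def by auto
      ultimately show ?thesis using HT' bT by simp
    qed
  next
    case Gne: False
    define k where "k = Min G"
    have kS: "kopt = Some k" using Gne kopt_def k_def by simp
    have finG: "finite G" using finCE unfolding G_def by simp
    have kG: "k \<in> G" unfolding k_def using finG Gne by (rule Min_in)
    have ak: "a \<le> k" using kG unfolding G_def by simp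
    have kmin: "\<And>x. x \<in> col_entries T (c+1) \<Longrightarrow> a \<le> x \<Longrightarrow> k \<le> x"
      unfolding k_def G_def using finG G_def by (simp add: Min_le)
    have kCE: "\<exists>r'. (r',c+1) \<in> dom T \<and> k \<in> ent T (r',c+1)" using kG CE unfolding G_def by auto
    have rte: "rt = (SOME r'. (r',c+1) \<in> dom T \<and> k \<in> ent T (r',c+1))" using kS rt_def by simp
    have rtP: "(rt, Suc c) \<in> dom T \<and> k \<in> ent T (rt, Suc c)"
      using someI_ex[OF kCE] rte by simp
    have rt1: "1 \<le> rt" using ps_pos[OF ps] rtP by blast
    define C where "C = cell T (rt, Suc c)"
    have vC: "valid_hook C" using vT rtP C_def by simp
    have kC: "k \<in> hentries C" using rtP C_def by simp
    have hCk: "hentry C \<le> k" using valid_ge[OF vC kC] .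
    have rt_le: "rt \<le> r"
    proof (rule ccontr)
      assume "\<not> rt \<le> r"
      then have lt: "r < rt" by simp
      then have rc1: "(r, Suc c) \<in> dom T" using ps_down[OF ps, of rt "Suc c" r "Suc c"] rtP r1 by simp
      then have "a \<le> hd0 T (r, Suc c)" using KEY1 by simp
      moreover have "hd0 T (r, Suc c) \<in> col_entries T (c+1)"
        using CE[of "hd0 T (r, Suc c)"] rc1 hentry_in[of "cell T (r, Suc c)"] by (metis Suc_eq_plus1)
      ultimately have "k \<le> hd0 T (r, Suc c)" using kmin by simp
      moreover have "hd0 T (r, Suc c) < hd0 T (rt, Suc c)" using Hcol[OF rc1, of rt] rtP lt hentry_in by blast
      ultimately show False using hCk C_def by simp
    qed
    have lowA: "\<And>r'. (r', Suc c) \<in> dom T \<Longrightarrow> r' < rt \<Longrightarrow> \<forall>x\<in>ent T (r', Suc c). x < a"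
    proof (intro ballI)
      fix r' x assume a': "(r', Suc c) \<in> dom T" "r' < rt" and x: "x \<in> ent T (r', Suc c)"
      have "x < hentry C" using Hcol[OF a'(1) conjunct1[OF rtP] a'(2)] x unfolding C_def by blast
      then have "x < k" using hCk by simp
      moreover have "x \<in> col_entries T (c+1)" using CE[of x] a'(1) x by (metis Suc_eq_plus1)
      ultimately show "x < a" using kmin by (meson not_le)
    qed
    have hCa: "hentry C \<noteq> k \<Longrightarrow> hentry C < a"
    proof -
      assume "hentry C \<noteq> k"
      then have "hentry C < k" using hCk by simp
      moreover have "hentry C \<in> col_entries T (c+1)"
        using CE[of "hentry C"] conjunct1[OF rtP] hentry_in[of C] unfolding C_def by (metis Suc_eq_plus1)
      ultimately show "hentry C < a" using kmin by (meson not_le)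
    qed
    have szC: "size (harm (cell T (rt, Suc c))) = size (harm C)" using C_def by simp
    show ?thesis
    proof (cases "rt = r")
      case False
      define h2 where "h2 = (let h' = replace_entry k a C in (hentry h', hleg h', harm h' + {#k#}))"
      define T' where "T' = T((r,c) := Some h1a, (rt,Suc c) := Some h2)"
      have bT: "bump T = T'" using bumpeq False kS unfolding T'_def h1a_def h2_def C_def by simp
      have h2facts: "valid_hook h2 \<and> (hentry h2 = a \<or> hentry h2 = hentry C) \<and>
          (\<forall>x\<in>hentries h2. \<exists>y\<in>hentries C. x \<le> y) \<and> size (harm h2) = size (harm C) + 1 \<and> harm h2 \<noteq> {#}"
      proof (cases "hentry C = k")
        case True
        have e: "h2 = (a, hleg C, harm C + {#k#})" unfolding h2_def replace_entry_def using True by simp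
        show ?thesis using vC True ak kC a1 unfolding e valid_hook_def
          by (auto simp: hentries_def)
      next
        case F1: False
        have hlt: "hentry C < a" using hCa F1 by simp
        show ?thesis
        proof (cases "k \<in> hleg C")
          case True
          have e: "h2 = (hentry C, insert a (hleg C - {k}), harm C + {#k#})"
            unfolding h2_def replace_entry_def using True F1 by simp
          show ?thesis using vC True ak kC hlt unfolding e valid_hook_def
            by (auto simp: hentries_def)
        next
          case False
          have kA: "k \<in># harm C" using kC F1 False by (auto simp: hentries_def)
          have e: "h2 = (hentry C, hleg C, harm C - {#k#} + {#a#} + {#k#})"
            unfolding h2_def replace_entry_def using False F1 by simp
          have sz: "size (harm C - {#k#} + {#a#} + {#k#}) = size (harm C) + 1"
            using kA by (simp add: size_Diff_singleton) (metis One_nat_def Suc_pred nonempty_has_size empty_iff set_mset_empty)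
          show ?thesis using vC kA ak kC hlt sz unfolding e valid_hook_def
            by (auto simp: hentries_def dest: in_diffD)
        qed
      qed
      have HT': "is_HVT T'"
      proof (rule step_HVT[OF HVT rc rt_le rt1 T'_def v1a e1a s1a _ aHd])
        show "valid_hook h2" using h2facts by simp
        show "hentry h2 = a \<or> (rt, Suc c) \<in> dom T \<and> hentry h2 = hd0 T (rt, Suc c)"
          using h2facts rtP C_def by auto
        show "\<forall>x\<in>hentries h2. \<exists>y\<in>ent T (rt, Suc c). x \<le> y" using h2facts C_def by simp
      qed (use False lowA rtP in auto)
      have "arm_excess T' + size (harm (cell T (r,c))) + size (harm C) = arm_excess T + (size (harm H) - 1) + (size (harm C) + 1)"
        using excess_upd2[OF fin rc, of "(rt,Suc c)" h1a h2] rtP sz1 h2facts szC unfolding T'_def by simp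
      then have "arm_excess T' = arm_excess T" using szH H_def by simp
      moreover have "dom T' = dom T" using rtP rc unfolding T'_def by auto
      moreover have "T' \<noteq> T"
      proof
        assume "T' = T"
        moreover have "T' (r,c) = Some h1a" unfolding T'_def by simp
        ultimately show False using neq1a by simp
      qed
      moreover have "bump_col T' = Suc c"
        using bump_col_next[OF fin rc _ cm T'_def] rtP h2facts by simp
      ultimately show ?thesis using HT' bT c_def by simp
    next
      case True
      have Cr: "C = cell T (r, Suc c)" using C_def True by simp
      have rc1: "(r, Suc c) \<in> dom T" using rtP True by simp
      have hk: "hentry C = k"
      proof -
        have "a \<le> hentry C" using KEY1 rc1 Cr by simp
        moreover have "hentry C \<in> col_entries T (c+1)"
          using CE[of "hentry C"] rc1 hentry_in[of C] unfolding Cr by (metis Suc_eq_plus1)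
        ultimately show ?thesis using kmin hCk by force
      qed
      have Lle: "\<forall>x\<in>Lmove. x \<le> hentry C"
        using Hrow[OF rc rc1] Cr H_def unfolding Lmove_def by (auto simp: hentries_def)
      define h2 where "h2 = (a, hleg C \<union> Lmove, harm C + {#k#})"
      define T' where "T' = T((r,c) := Some h1b, (rt,Suc c) := Some h2)"
      have bT: "bump T = T'" using bumpeq True kS unfolding T'_def h1b_def h2_def Cr by simp
      have finL: "finite Lmove" using vH unfolding Lmove_def valid_hook_def by simp
      have v2: "valid_hook h2" using vC hk ak a1 finL unfolding h2_def valid_hook_def Lmove_def
        by fastforce
      have d2: "\<forall>x\<in>hentries h2. \<exists>y\<in>hentries C. x \<le> y"
      proof
        fix x assume "x \<in> hentries h2"
        then have "x = a \<or> x \<in> hleg C \<or> x \<in> Lmove \<or> x \<in># harm C \<or> x = k"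
          unfolding h2_def by auto
        then show "\<exists>y\<in>hentries C. x \<le> y"
          using hk ak Lle hentry_in[of C] by (auto simp: hentries_def)
      qed
      have HT': "is_HVT T'"
      proof (rule step_HVT[OF HVT rc rt_le rt1 T'_def v1b e1b s1b _ aHd v2 lowA])
        show "rt = r \<Longrightarrow> \<forall>x\<in>hentries h1b. x \<le> a" using s1rb by simp
        show "hentry h2 = a \<or> (rt, Suc c) \<in> dom T \<and> hentry h2 = hd0 T (rt, Suc c)"
          unfolding h2_def by simp
        show "(rt, Suc c) \<in> dom T \<Longrightarrow> \<forall>x\<in>hentries h2. \<exists>y\<in>ent T (rt, Suc c). x \<le> y"
          using d2 C_def by simp
        show "(rt, Suc c) \<notin> dom T \<Longrightarrow> \<forall>r'. ((r', Suc c) \<in> dom T) = (1 \<le> r' \<and> r' < rt)"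
          using rtP by simp
      qed
      have "arm_excess T' + size (harm (cell T (r,c))) + size (harm C) = arm_excess T + (size (harm H) - 1) + (size (harm C) + 1)"
        using excess_upd2[OF fin rc, of "(rt,Suc c)" h1b h2] rtP sz1 szC unfolding T'_def h2_def by simp
      then have "arm_excess T' = arm_excess T" using szH H_def by simp
      moreover have "dom T' = dom T" using rtP rc unfolding T'_def by auto
      moreover have "T' \<noteq> T"
      proof
        assume "T' = T"
        moreover have "T' (r,c) = Some h1b" unfolding T'_def by simp
        ultimately show False using neq1b by simp
      qed
      moreover have "bump_col T' = Suc c"
        using bump_col_next[OF fin rc _ cm T'_def] rtP unfolding h2_def by simp
      ultimately show ?thesis using HT' bT c_def by simp
    qed
  qed
qed


lemma bump_col_le:
  assumes "is_HVT T" "arm_excess T \<noteq> 0"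
  shows "bump_col T \<le> Max (snd ` dom T)"
proof -
  have fin: "finite (dom T)" using assms(1) unfolding is_HVT_def partition_shape_def by simp
  have AC: "arm_cells T \<noteq> {}" using excess_pos_cells[OF fin assms(2)] .
  have finAC: "finite (arm_cells T)" using fin unfolding arm_cells_def by simp
  have "bump_col T \<in> snd ` arm_cells T" unfolding bump_col_def using AC finAC by (intro Max_in) auto
  then have "bump_col T \<in> snd ` dom T" unfolding arm_cells_def by auto
  then show ?thesis using fin by simp
qed

lemma chain:
  "is_HVT T \<Longrightarrow> arm_excess T \<noteq> 0 \<Longrightarrow> \<exists>d.
    (\<forall>j<d. dom ((bump^^Suc j) T) = dom ((bump^^j) T) \<and> (bump^^Suc j) T \<noteq> (bump^^j) T) \<and>
    dom ((bump^^Suc d) T) \<noteq> dom ((bump^^d) T) \<and> is_HVT ((bump^^Suc d) T) \<and>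
    arm_excess ((bump^^Suc d) T) = arm_excess T - 1"
proof (induction "Max (snd ` dom T) - bump_col T" arbitrary: T rule: less_induct)
  case less
  note bm = bump_main[OF less.prems]
  show ?case
  proof (cases "dom (bump T) \<noteq> dom T \<and> arm_excess (bump T) = arm_excess T - 1")
    case True
    then show ?thesis using bm by (intro exI[of _ 0]) simp
  next
    case False
    then have st: "is_HVT (bump T)" "dom (bump T) = dom T" "bump T \<noteq> T" "arm_excess (bump T) = arm_excess T"
      "bump_col (bump T) = Suc (bump_col T)" using bm by auto
    have ex1: "arm_excess (bump T) \<noteq> 0" using st less.prems by simp
    have "bump_col (bump T) \<le> Max (snd ` dom (bump T))" using bump_col_le[OF st(1) ex1] .
    then have lt: "Max (snd ` dom (bump T)) - bump_col (bump T) < Max (snd ` dom T) - bump_col T"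
      using st by simp
    obtain d where d: "\<forall>j<d. dom ((bump^^Suc j) (bump T)) = dom ((bump^^j) (bump T)) \<and> (bump^^Suc j) (bump T) \<noteq> (bump^^j) (bump T)"
      "dom ((bump^^Suc d) (bump T)) \<noteq> dom ((bump^^d) (bump T))" "is_HVT ((bump^^Suc d) (bump T))"
      "arm_excess ((bump^^Suc d) (bump T)) = arm_excess (bump T) - 1"
      using less.hyps[OF lt st(1) ex1] by blast
    have sh: "\<And>n. (bump^^n) (bump T) = (bump^^Suc n) T" by (simp add: funpow_Suc_right del: funpow.simps)
    show ?thesis
    proof (intro exI[of _ "Suc d"] conjI)
      show "\<forall>j<Suc d. dom ((bump^^Suc j) T) = dom ((bump^^j) T) \<and> (bump^^Suc j) T \<noteq> (bump^^j) T"
      proof (intro allI impI)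
        fix j assume "j < Suc d"
        show "dom ((bump^^Suc j) T) = dom ((bump^^j) T) \<and> (bump^^Suc j) T \<noteq> (bump^^j) T"
        proof (cases j)
          case 0 then show ?thesis using st by simp
        next
          case (Suc j')
          then have "j' < d" using \<open>j < Suc d\<close> by simp
          then show ?thesis using d(1) Suc sh by metis
        qed
      qed
      show "dom ((bump^^Suc (Suc d)) T) \<noteq> dom ((bump^^Suc d) T)" using d(2) sh by metis
      show "is_HVT ((bump^^Suc (Suc d)) T)" using d(3) sh by metis
      show "arm_excess ((bump^^Suc (Suc d)) T) = arm_excess T - 1" using d(4) sh st by metis
    qed
  qed
qed

lemma insert_main:
  assumes "is_HVT T"
  shows "is_HVT (uncrowd_insert T) \<and> arm_excess (uncrowd_insert T) = arm_excess T - 1"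
proof (cases "arm_excess T = 0")
  case True
  then have b: "bump T = T" unfolding bump_def by simp
  have "(LEAST d. 1 \<le> d \<and> (dom ((bump ^^ d) T) \<noteq> dom ((bump ^^ (d-1)) T) \<or>
                  (bump ^^ d) T = (bump ^^ (d-1)) T)) = 1"
    by (rule Least_equality) (use b in auto)
  then have "uncrowd_insert T = T" unfolding uncrowd_insert_def Let_def using b by simp
  then show ?thesis using assms True by simp
next
  case False
  obtain d where d: "\<forall>j<d. dom ((bump^^Suc j) T) = dom ((bump^^j) T) \<and> (bump^^Suc j) T \<noteq> (bump^^j) T"
      "dom ((bump^^Suc d) T) \<noteq> dom ((bump^^d) T)" "is_HVT ((bump^^Suc d) T)"
      "arm_excess ((bump^^Suc d) T) = arm_excess T - 1"
    using chain[OF assms False] by blast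
  have "(LEAST d. 1 \<le> d \<and> (dom ((bump ^^ d) T) \<noteq> dom ((bump ^^ (d-1)) T) \<or>
                  (bump ^^ d) T = (bump ^^ (d-1)) T)) = Suc d"
  proof (rule Least_equality)
    show "1 \<le> Suc d \<and> (dom ((bump ^^ Suc d) T) \<noteq> dom ((bump ^^ (Suc d - 1)) T) \<or> (bump ^^ Suc d) T = (bump ^^ (Suc d - 1)) T)"
      using d(2) by simp
  next
    fix y assume y: "1 \<le> y \<and> (dom ((bump ^^ y) T) \<noteq> dom ((bump ^^ (y - 1)) T) \<or> (bump ^^ y) T = (bump ^^ (y - 1)) T)"
    show "Suc d \<le> y"
    proof (rule ccontr)
      assume "\<not> Suc d \<le> y"
      then have "y - 1 < d" using y by linarith
      moreover have "y = Suc (y - 1)" using y by simp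
      ultimately show False using d(1) y by metis
    qed
  qed
  then have "uncrowd_insert T = (bump^^Suc d) T" unfolding uncrowd_insert_def Let_def by simp
  then show ?thesis using d by simp
qed

lemma iter_main:
  assumes "is_HVT T"
  shows "is_HVT ((uncrowd_insert^^n) T) \<and> arm_excess ((uncrowd_insert^^n) T) = arm_excess T - n"
proof (induction n)
  case 0 then show ?case using assms by simp
next
  case (Suc n)
  then show ?case using insert_main[of "(uncrowd_insert^^n) T"] by simp
qed

theorem corollary3p7:
  assumes "is_HVT T"
  shows "is_set_valued (uncrowd_P T)"
  using iter_main[OF assms, of "arm_excess T"] unfolding uncrowd_P_def is_set_valued_def by simp

end
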